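(* For $n\ge1$ let $\pi_m(n)=\prod_{k=1,\,k\ne m}^{n}\left(1-\frac{m^2}{k^2}\right)$ and $\alpha_m^{(1)}(n)=\frac{1}{m\,\pi_m(n)}$ for $1\le m\le n$. Let $P_{2n}$ be the unique polynomial of degree at most $2n$ interpolating $y(x)=\sin x$ at the points $x=m\pi/2$, $m=-n,\dots,n$. Then $$P_{2n}'(0)=\frac{1}{\pi}\sum_{m=1}^{n}\alpha_m^{(1)}(n)\left(\sin\tfrac{m\pi}{2}-\sin\!\left(-\tfrac{m\pi}{2}\right)\right)=\frac{2}{\pi}\sum_{\substack{0\le j\\ 2j+1\le n}}(-1)^{j}\alpha_{2j+1}^{(1)}(n),$$ and $$\lim_{n\to\infty}P_{2n}'(0)=1=\sin'(0).$$ *)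

theory Defs
  imports Complex_Main "HOL-Computational_Algebra.Polynomial"
begin

definition pi_m :: "nat \<Rightarrow> nat \<Rightarrow> real" where
  "pi_m m n = (\<Prod>k\<in>{1..n} - {m}. (1 - (real m)^2 / (real k)^2))"

definition alpha1 :: "nat \<Rightarrow> nat \<Rightarrow> real" where
  "alpha1 m n = 1 / (real m * pi_m m n)"

definition interp_sin :: "nat \<Rightarrow> real poly" where
  "interp_sin n = (THE P. degree P \<le> 2 * n \<and>
      (\<forall>m::int. -int n \<le> m \<and> m \<le> int n \<longrightarrow> poly P (real_of_int m * pi / 2) = sin (real_of_int m * pi / 2)))"

end

theory Submission imports Defs begin

definition xn :: "nat \<Rightarrow> real" where "xn k = real k * pi / 2"

definition wq :: "nat \<Rightarrow> nat \<Rightarrow> real" where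
  "wq n m = (sin (xn m) / xn m) / (\<Prod>k\<in>{1..n}-{m}. (xn m)^2 - (xn k)^2)"

definition Qp :: "nat \<Rightarrow> real poly" where
  "Qp n = (\<Sum>m\<in>{1..n}. smult (wq n m) (\<Prod>k\<in>{1..n}-{m}. [:-((xn k)^2), 1:]))"

definition Pp :: "nat \<Rightarrow> real poly" where
  "Pp n = [:0,1:] * pcompose (Qp n) [:0,0,1:]"

lemma xn_sq_inj: "(xn a)^2 = (xn b)^2 \<Longrightarrow> a = b"
proof -
  assume "(xn a)^2 = (xn b)^2"
  hence "xn a = xn b" unfolding xn_def using pi_gt_zero
    by (metis divide_nonneg_pos mult_nonneg_nonneg of_nat_0_le_iff pi_ge_zero power2_eq_iff_nonneg zero_less_numeral)
  thus "a = b" unfolding xn_def using pi_gt_zero by simp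
qed

lemma degree_Qp: "degree (Qp n) \<le> n - 1"
  unfolding Qp_def
proof (rule degree_sum_le)
  fix m assume m: "m \<in> {1..n}"
  have "degree (\<Prod>k\<in>{1..n}-{m}. [:-((xn k)^2), 1:]) \<le> (\<Sum>k\<in>{1..n}-{m}. degree [:-((xn k)^2), (1::real):])"
    using degree_prod_sum_le[of "{1..n}-{m}" "\<lambda>k. [:-((xn k)^2), (1::real):]"] by (simp add: o_def)
  also have "\<dots> = n - 1" using m by simp
  finally show "degree (smult (wq n m) (\<Prod>k\<in>{1..n}-{m}. [:-((xn k)^2), 1:])) \<le> n - 1"
    by (meson degree_smult_le le_trans)
qed simp

lemma degree_Pp: "degree (Pp n) \<le> 2 * n"
proof -
  have "degree (Pp n) \<le> degree [:0,1::real:] + degree (pcompose (Qp n) [:0,0,1:])"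
    unfolding Pp_def by (rule degree_mult_le)
  also have "\<dots> \<le> 1 + (n - 1) * 2"
    using degree_pcompose_le[of "Qp n" "[:0,0,1::real:]"] degree_Qp[of n]
    by (simp add: add_le_mono mult_le_mono)
  finally have "degree (Pp n) \<le> 1 + (n - 1) * 2" .
  moreover have "n = 0 \<Longrightarrow> Pp n = 0" by (simp add: Pp_def Qp_def)
  ultimately show ?thesis by (cases n) auto
qed

lemma poly_Qp: assumes j: "j \<in> {1..n}" shows "poly (Qp n) ((xn j)^2) = sin (xn j) / xn j"
proof -
  have "poly (Qp n) ((xn j)^2) = (\<Sum>m\<in>{1..n}. wq n m * (\<Prod>k\<in>{1..n}-{m}. (xn j)^2 - (xn k)^2))"
    unfolding Qp_def by (simp add: poly_sum poly_prod)
  also have "\<dots> = wq n j * (\<Prod>k\<in>{1..n}-{j}. (xn j)^2 - (xn k)^2)"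
  proof (rule sum.remove[OF _ j, THEN trans])
    have "(\<Sum>m\<in>{1..n}-{j}. wq n m * (\<Prod>k\<in>{1..n}-{m}. (xn j)^2 - (xn k)^2)) = 0"
    proof (rule sum.neutral, rule ballI)
      fix m assume "m \<in> {1..n}-{j}"
      hence "j \<in> {1..n}-{m}" using j by auto
      hence "(\<Prod>k\<in>{1..n}-{m}. (xn j)^2 - (xn k)^2) = 0"
        by (intro prod_zero) auto
      thus "wq n m * (\<Prod>k\<in>{1..n}-{m}. (xn j)^2 - (xn k)^2) = 0" by simp
    qed
    thus "wq n j * (\<Prod>k\<in>{1..n}-{j}. (xn j)^2 - (xn k)^2) +
      (\<Sum>m\<in>{1..n}-{j}. wq n m * (\<Prod>k\<in>{1..n}-{m}. (xn j)^2 - (xn k)^2)) =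
      wq n j * (\<Prod>k\<in>{1..n}-{j}. (xn j)^2 - (xn k)^2)" by simp
  qed simp
  also have "\<dots> = sin (xn j) / xn j"
  proof -
    have "(\<Prod>k\<in>{1..n}-{j}. (xn j)^2 - (xn k)^2) \<noteq> 0"
      using xn_sq_inj by (subst prod_zero_iff) auto
    thus ?thesis unfolding wq_def by simp
  qed
  finally show ?thesis .
qed

lemma poly_Pp:
  assumes "-int n \<le> i" "i \<le> int n"
  shows "poly (Pp n) (real_of_int i * pi / 2) = sin (real_of_int i * pi / 2)"
proof -
  have P: "poly (Pp n) y = y * poly (Qp n) (y^2)" for y
    unfolding Pp_def by (simp add: poly_pcompose power2_eq_square)
  consider "i = 0" | j where "j \<in> {1..n}" "i = int j" | j where "j \<in> {1..n}" "i = - int j"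
  proof -
    have "i = 0 \<or> (nat i \<in> {1..n} \<and> i = int (nat i)) \<or> (nat (-i) \<in> {1..n} \<and> i = - int (nat (-i)))"
      using assms by auto
    thus "(i = 0 \<Longrightarrow> thesis) \<Longrightarrow> (\<And>j. j \<in> {1..n} \<Longrightarrow> i = int j \<Longrightarrow> thesis) \<Longrightarrow> (\<And>j. j \<in> {1..n} \<Longrightarrow> i = - int j \<Longrightarrow> thesis) \<Longrightarrow> thesis"
      by blast
  qed
  thus ?thesis
  proof cases
    case 1 thus ?thesis by (simp add: P)
  next
    case (2 j)
    have "xn j \<noteq> 0" using 2 by (simp add: xn_def)
    thus ?thesis using 2 poly_Qp[of j n] by (simp add: P xn_def)
  next
    case (3 j)
    have "xn j \<noteq> 0" using 3 by (simp add: xn_def)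
    have "poly (Pp n) (- xn j) = - xn j * poly (Qp n) ((xn j)^2)" by (simp add: P)
    also have "\<dots> = sin (- xn j)" using 3 poly_Qp[of j n] \<open>xn j \<noteq> 0\<close> by simp
    finally show ?thesis using 3 by (simp add: xn_def)
  qed
qed

lemma interp_sin_eq: "interp_sin n = Pp n"
  unfolding interp_sin_def
proof (rule the_equality)
  show "degree (Pp n) \<le> 2 * n \<and> (\<forall>m::int. -int n \<le> m \<and> m \<le> int n \<longrightarrow> poly (Pp n) (real_of_int m * pi / 2) = sin (real_of_int m * pi / 2))"
    using degree_Pp poly_Pp by blast
next
  fix P assume H: "degree P \<le> 2 * n \<and> (\<forall>m::int. -int n \<le> m \<and> m \<le> int n \<longrightarrow> poly P (real_of_int m * pi / 2) = sin (real_of_int m * pi / 2))"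
  define A where "A = (\<lambda>m::int. real_of_int m * pi / 2) ` {-int n..int n}"
  have inj: "inj_on (\<lambda>m::int. real_of_int m * pi / 2) {-int n..int n}"
    by (rule inj_onI) simp
  have cA: "card A = 2 * n + 1" unfolding A_def by (simp add: card_image[OF inj])
  show "P = Pp n"
  proof (rule poly_eqI_degree[of A])
    fix x assume "x \<in> A"
    then obtain m where m: "m \<in> {-int n..int n}" and xeq: "x = real_of_int m * pi / 2" unfolding A_def by auto
    show "poly P x = poly (Pp n) x" unfolding xeq using H poly_Pp[of n m] m by simp
  qed (use cA H degree_Pp[of n] in auto)
qed

lemma prodB:
  assumes "n < m"
  shows "(\<Prod>k\<in>{1..n}. (1 - (real m)^2 / (real k)^2)) * (real m * fact (m - n - 1) * (fact n)^2) = (-1)^n * fact (m + n)"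
  using assms
proof (induction n)
  case 0 thus ?case by (simp add: fact_reduce[of m])
next
  case (Suc n)
  hence IH: "(\<Prod>k\<in>{1..n}. (1 - (real m)^2 / (real k)^2)) * (real m * fact (m - n - 1) * (fact n)^2) = (-1)^n * fact (m + n)"
    by simp
  have f1: "fact (m - n - 1) = real (m - n - 1) * (fact (m - Suc n - 1) :: real)"
  proof -
    have "m - n - 1 = Suc (m - Suc n - 1)" using Suc.prems by simp
    hence "fact (m - n - 1) = (fact (Suc (m - Suc n - 1)) :: real)" by simp
    also have "\<dots> = real (Suc (m - Suc n - 1)) * fact (m - Suc n - 1)" by (rule fact_Suc)
    finally show ?thesis using \<open>m - n - 1 = Suc (m - Suc n - 1)\<close> by simp
  qed
  have f2: "real (m - n - 1) = real m - real n - 1" using Suc.prems by linarith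
  have pr: "(\<Prod>k\<in>{1..Suc n}. (1 - (real m)^2 / (real k)^2)) = (\<Prod>k\<in>{1..n}. (1 - (real m)^2 / (real k)^2)) * (1 - (real m)^2 / (real (Suc n))^2)"
    by (simp add: prod.nat_ivl_Suc' mult.commute)
  show ?case
  proof -
    define P where "P = (\<Prod>k\<in>{1..n}. (1 - (real m)^2 / (real k)^2))"
    define F where "F = (fact (m - Suc n - 1) :: real)"
    have e1: "(1 - (real m)^2 / (real (Suc n))^2) * (fact (Suc n))^2 = - (real m - real n - 1) * (real m + real n + 1) * (fact n)^2"
    proof -
      have s0: "(real (Suc n))^2 \<noteq> 0" by simp
      have a: "(1 - (real m)^2 / (real (Suc n))^2) * (real (Suc n))^2 = (real (Suc n))^2 - (real m)^2"
        using s0 by (simp add: field_simps)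
      have b: "(fact (Suc n) :: real)^2 = (real (Suc n))^2 * (fact n)^2"
        by (simp add: power_mult_distrib)
      have c: "(real (Suc n))^2 - (real m)^2 = - (real m - real n - 1) * (real m + real n + 1)"
        by (simp add: algebra_simps power2_eq_square)
      have "(1 - (real m)^2 / (real (Suc n))^2) * (fact (Suc n))^2
          = ((1 - (real m)^2 / (real (Suc n))^2) * (real (Suc n))^2) * (fact n)^2"
        unfolding b by (simp only: mult.assoc)
      also have "\<dots> = - (real m - real n - 1) * (real m + real n + 1) * (fact n)^2"
        unfolding a c ..
      finally show ?thesis .
    qed
    have "P * (1 - (real m)^2 / (real (Suc n))^2) * (real m * F * (fact (Suc n))^2)
        = - (real m + real n + 1) * (P * (real m * ((real m - real n - 1) * F) * (fact n)^2))"
    proof -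
      define T where "T = (1 - (real m)^2 / (real (Suc n))^2)"
      define G where "G = (fact (Suc n) :: real)^2"
      have e: "T * G = - (real m - real n - 1) * (real m + real n + 1) * (fact n)^2"
        using e1 unfolding T_def G_def .
      have "P * T * (real m * F * G) = P * real m * F * (T * G)" by (simp only: mult_ac)
      also have "\<dots> = - (real m + real n + 1) * (P * (real m * ((real m - real n - 1) * F) * (fact n)^2))"
        unfolding e by (simp only: mult_ac mult_minus_left mult_minus_right)
      finally show ?thesis unfolding T_def G_def .
    qed
    also have "\<dots> = - (real m + real n + 1) * ((-1)^n * fact (m + n))"
      using IH f1 f2 unfolding P_def F_def by (simp add: diff_diff_eq add.commute)
    also have "\<dots> = (-1)^(Suc n) * fact (m + Suc n)"
      by (simp add: algebra_simps)
    finally show ?thesis unfolding P_def F_def pr .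
  qed
qed

lemma pi_closed:
  assumes m1: "1 \<le> m" and mn: "m \<le> n"
  shows "pi_m m n * (2 * (fact n)^2) = (-1)^(m-1) * fact (n - m) * fact (n + m)"
  using mn
proof (induct n rule: dec_induct)
  case base
  have S: "{1..m} - {m} = {1..m-1}" by auto
  have B: "pi_m m m * (real m * fact (m - (m-1) - 1) * (fact (m-1))^2) = (-1)^(m-1) * fact (m + (m-1))"
    unfolding pi_m_def S using prodB[of "m-1" m] m1 by simp
  define f where "f = (fact (m-1) :: real)"
  have fm: "(fact m :: real) = real m * f" unfolding f_def using m1 by (simp add: fact_reduce[of m])
  have f2m: "(fact (m + m) :: real) = 2 * real m * fact (m + (m-1))"
    using m1 fact_reduce[of "m+m", where 'a=real] by simp
  have B': "pi_m m m * (real m * f^2) = (-1)^(m-1) * fact (m + (m-1))"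
    using B m1 unfolding f_def by simp
  have "pi_m m m * (2 * (fact m)^2) = 2 * real m * (pi_m m m * (real m * f^2))"
    unfolding fm by (simp add: power2_eq_square mult_ac)
  also have "\<dots> = (-1)^(m-1) * fact (m - m) * fact (m + m)"
    unfolding B' f2m by simp
  finally show ?case .
next
  case (step n)
  have S: "{1..Suc n} - {m} = insert (Suc n) ({1..n} - {m})" using step by auto
  have pr: "pi_m m (Suc n) = (1 - (real m)^2 / (real (Suc n))^2) * pi_m m n"
    unfolding pi_m_def S by (subst prod.insert) auto
  define T where "T = (1 - (real m)^2 / (real (Suc n))^2)"
  have a: "T * (real (Suc n))^2 = (real (Suc n))^2 - (real m)^2"
    unfolding T_def by (simp add: field_simps)
  have c: "(real (Suc n))^2 - (real m)^2 = real (Suc n - m) * real (Suc n + m)"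
    using step by (simp add: of_nat_diff algebra_simps power2_eq_square)
  have b: "(fact (Suc n) :: real)^2 = (real (Suc n))^2 * (fact n)^2"
    by (simp add: power_mult_distrib)
  have d1: "(fact (Suc n - m) :: real) = real (Suc n - m) * fact (n - m)"
    using step by (simp add: Suc_diff_le)
  have d2: "(fact (Suc n + m) :: real) = real (Suc n + m) * fact (n + m)"
    by simp
  have "pi_m m (Suc n) * (2 * (fact (Suc n))^2) = (T * (real (Suc n))^2) * (pi_m m n * (2 * (fact n)^2))"
    unfolding pr b T_def by (simp only: mult_ac)
  also have "\<dots> = real (Suc n - m) * real (Suc n + m) * ((-1)^(m-1) * fact (n - m) * fact (n + m))"
    unfolding a c step(3) ..
  also have "\<dots> = (-1)^(m-1) * fact (Suc n - m) * fact (Suc n + m)"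
    unfolding d1 d2 by (simp only: mult_ac)
  finally show ?case .
qed

definition cc :: "nat \<Rightarrow> nat \<Rightarrow> real" where
  "cc n m = (fact n)^2 / (fact (n - m) * fact (n + m))"

lemma alpha_closed:
  assumes "1 \<le> m" "m \<le> n"
  shows "alpha1 m n = 2 * (-1)^(m-1) * cc n m / real m"
proof -
  have P: "pi_m m n = (-1)^(m-1) * fact (n - m) * fact (n + m) / (2 * (fact n)^2)"
    using pi_closed[OF assms] by (simp add: field_simps)
  show ?thesis
  proof (cases "even (m - 1)")
    case True
    thus ?thesis unfolding alpha1_def cc_def P by simp
  next
    case False
    thus ?thesis unfolding alpha1_def cc_def P by simp
  qed
qed

lemma cc_pos: "0 < cc n m"
  unfolding cc_def by simp

lemma cc_Suc:
  assumes "m < n"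
  shows "cc n (Suc m) = cc n m * ((real n - real m) / (real n + real m + 1))"
proof -
  have d1: "(fact (n - m) :: real) = (real n - real m) * fact (n - Suc m)"
    using assms by (metis Suc_diff_Suc fact_Suc of_nat_diff less_imp_le of_nat_fact diff_Suc_Suc)
  have d2: "(fact (n + Suc m) :: real) = (real n + real m + 1) * fact (n + m)"
    by simp
  have "real n - real m \<noteq> 0" "real n + real m + 1 \<noteq> 0" using assms by auto
  moreover have "(fact (n - Suc m) :: real) \<noteq> 0" "(fact (n + m) :: real) \<noteq> 0" by auto
  moreover have "\<And>F A B a b::real. a \<noteq> 0 \<Longrightarrow> b \<noteq> 0 \<Longrightarrow> A \<noteq> 0 \<Longrightarrow> B \<noteq> 0 \<Longrightarrow>
      F / (A * (b * B)) = F / (a * A * B) * (a / b)" by (simp add: field_simps)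
  ultimately show ?thesis unfolding cc_def d1 d2 by simp
qed

lemma cc_le1: "m \<le> n \<Longrightarrow> cc n m \<le> 1"
proof (induction m)
  case 0 thus ?case by (simp add: cc_def power2_eq_square)
next
  case (Suc m)
  hence "m < n" by simp
  have "(real n - real m) / (real n + real m + 1) \<le> 1" "0 \<le> (real n - real m) / (real n + real m + 1)"
    using \<open>m < n\<close> by auto
  moreover have "cc n m \<le> 1" using Suc by simp
  ultimately show ?case unfolding cc_Suc[OF \<open>m < n\<close>] using cc_pos[of n m]
    by (metis mult_le_one less_imp_le)
qed

lemma cc_mono: "m < n \<Longrightarrow> cc n (Suc m) \<le> cc n m"
proof -
  assume mn: "m < n"
  have "(real n - real m) / (real n + real m + 1) \<le> 1" using mn by auto
  thus ?thesis unfolding cc_Suc[OF mn] using cc_pos[of n m]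
    by (intro mult_left_le) auto
qed

lemma ratio_lim: "(\<lambda>n. (real n - real m) / (real n + real m + 1)) \<longlonglongrightarrow> 1"
proof -
  have "(\<lambda>n. real (2 * m + 1) / (real n + real m + 1)) \<longlonglongrightarrow> 0"
    using LIMSEQ_ignore_initial_segment[OF lim_const_over_n[of "real (2 * m + 1)"], of "m + 1"]
    by (simp add: add_ac)
  hence "(\<lambda>n. 1 - real (2 * m + 1) / (real n + real m + 1)) \<longlonglongrightarrow> 1 - 0"
    by (intro tendsto_diff tendsto_const)
  moreover have "1 - real (2 * m + 1) / (real n + real m + 1) = (real n - real m) / (real n + real m + 1)" for n
  proof -
    have "real n + real m + 1 \<noteq> 0" by linarith
    thus ?thesis by (simp add: field_simps)
  qed
  ultimately show ?thesis by simp
qed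

lemma cc_lim: "(\<lambda>n. cc n m) \<longlonglongrightarrow> 1"
proof (induction m)
  case 0 thus ?case by (simp add: cc_def power2_eq_square)
next
  case (Suc m)
  have "(\<lambda>n. cc n m * ((real n - real m) / (real n + real m + 1))) \<longlonglongrightarrow> 1 * 1"
    by (intro tendsto_mult Suc ratio_lim)
  moreover have "eventually (\<lambda>n. cc n m * ((real n - real m) / (real n + real m + 1)) = cc n (Suc m)) sequentially"
    using eventually_gt_at_top[of m] by eventually_elim (simp add: cc_Suc)
  ultimately show ?case using Lim_transform_eventually by fastforce
qed


lemma pi_m_nz: "1 \<le> m \<Longrightarrow> m \<le> n \<Longrightarrow> pi_m m n \<noteq> 0"
  using pi_closed[of m n] by auto

lemma aux_frac:
  fixes c k m :: real
  assumes "c \<noteq> 0" "k \<noteq> 0" "k^2 \<noteq> m^2"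
  shows "- (k^2 * c) / (m^2 * c - k^2 * c) = 1 / (1 - m^2 / k^2)"
proof -
  have "m^2 * c - k^2 * c \<noteq> 0" using assms by auto
  moreover have "1 - m^2/k^2 \<noteq> 0" using assms by (auto simp: field_simps)
  ultimately show ?thesis using assms by (simp add: field_simps)
qed

lemma xn_sq: "(xn k)^2 = (real k)^2 * (pi^2 / 4)"
  unfolding xn_def by (simp add: power_mult_distrib power_divide)

lemma term_eq:
  assumes m: "m \<in> {1..n}"
  shows "wq n m * (\<Prod>k\<in>{1..n}-{m}. - ((xn k)^2))
       = (1 / pi) * (alpha1 m n * (sin (real m * pi / 2) - sin (- (real m * pi / 2))))"
proof -
  have "(\<Prod>k\<in>{1..n}-{m}. - ((xn k)^2)) / (\<Prod>k\<in>{1..n}-{m}. (xn m)^2 - (xn k)^2)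
      = (\<Prod>k\<in>{1..n}-{m}. - ((xn k)^2) / ((xn m)^2 - (xn k)^2))"
    by (rule prod_dividef[symmetric])
  also have "\<dots> = (\<Prod>k\<in>{1..n}-{m}. 1 / (1 - (real m)^2 / (real k)^2))"
  proof (rule prod.cong[OF refl])
    fix k assume k: "k \<in> {1..n}-{m}"
    have "(real k)^2 \<noteq> (real m)^2" using k by auto
    thus "- ((xn k)^2) / ((xn m)^2 - (xn k)^2) = 1 / (1 - (real m)^2 / (real k)^2)"
      unfolding xn_sq using k by (intro aux_frac) auto
  qed
  also have "\<dots> = 1 / pi_m m n"
    unfolding pi_m_def by (simp add: prod_dividef)
  finally have E: "(\<Prod>k\<in>{1..n}-{m}. - ((xn k)^2)) / (\<Prod>k\<in>{1..n}-{m}. (xn m)^2 - (xn k)^2) = 1 / pi_m m n" .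
  have "wq n m * (\<Prod>k\<in>{1..n}-{m}. - ((xn k)^2)) = (sin (xn m) / xn m) *
     ((\<Prod>k\<in>{1..n}-{m}. - ((xn k)^2)) / (\<Prod>k\<in>{1..n}-{m}. (xn m)^2 - (xn k)^2))"
    unfolding wq_def by simp
  also have "\<dots> = (sin (xn m) / xn m) / pi_m m n" unfolding E by simp
  also have "\<dots> = (1 / pi) * (alpha1 m n * (sin (real m * pi / 2) - sin (- (real m * pi / 2))))"
  proof -
    have "pi_m m n \<noteq> 0" using m pi_m_nz by auto
    moreover have "real m \<noteq> 0" using m by auto
    ultimately show ?thesis unfolding alpha1_def xn_def using pi_gt_zero
      by (simp add: field_simps)
  qed
  finally show ?thesis .
qed

lemma deriv_formula:
  "poly (pderiv (interp_sin n)) 0 = (1 / pi) * (\<Sum>m=1..n. alpha1 m n * (sin (real m * pi / 2) - sin (- (real m * pi / 2))))"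
proof -
  have "poly (pderiv (interp_sin n)) 0 = poly (Qp n) 0"
    unfolding interp_sin_eq Pp_def by (simp add: pderiv_mult poly_pcompose pderiv_pCons)
  also have "\<dots> = (\<Sum>m=1..n. wq n m * (\<Prod>k\<in>{1..n}-{m}. - ((xn k)^2)))"
    unfolding Qp_def by (simp add: poly_sum poly_prod)
  also have "\<dots> = (\<Sum>m=1..n. (1 / pi) * (alpha1 m n * (sin (real m * pi / 2) - sin (- (real m * pi / 2)))))"
    by (rule sum.cong[OF refl]) (rule term_eq)
  finally show ?thesis by (simp add: sum_distrib_left)
qed

lemma sin_odd: "sin (real (2 * j + 1) * pi / 2) = (-1)^j"
proof -
  have "sin (real (2 * j + 1) * pi / 2) = sin (real j * pi + pi / 2)"
    by (rule arg_cong[where f=sin]) (simp add: field_simps)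
  also have "\<dots> = (-1)^j" by (simp add: sin_add)
  finally show ?thesis .
qed

lemma sin_even: "sin (real (2 * i) * pi / 2) = 0"
proof -
  have "real (2 * i) * pi / 2 = real i * pi" by simp
  thus ?thesis by simp
qed

lemma sum_sin:
  "(\<Sum>m=1..n. alpha1 m n * (sin (real m * pi / 2) - sin (- (real m * pi / 2))))
     = 2 * (\<Sum>j\<in>{j::nat. 2 * j + 1 \<le> n}. (-1) ^ j * alpha1 (2 * j + 1) n)"
proof -
  define g where "g m = alpha1 m n * (sin (real m * pi / 2) - sin (- (real m * pi / 2)))" for m
  define J where "J = {j::nat. 2 * j + 1 \<le> n}"
  have finJ: "finite J" unfolding J_def by (rule finite_subset[of _ "{..n}"]) auto
  have inj: "inj_on (\<lambda>j. 2 * j + 1) J" by (rule inj_onI) simp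
  have "(\<Sum>m=1..n. g m) = (\<Sum>m\<in>(\<lambda>j. 2 * j + 1) ` J. g m)"
  proof (rule sum.mono_neutral_right)
    show "(\<lambda>j. 2 * j + 1) ` J \<subseteq> {1..n}" unfolding J_def by auto
    show "\<forall>i\<in>{1..n} - (\<lambda>j. 2 * j + 1) ` J. g i = 0"
    proof
      fix i assume i: "i \<in> {1..n} - (\<lambda>j. 2 * j + 1) ` J"
      have "even i"
      proof (rule ccontr)
        assume "odd i"
        then obtain j where "i = 2 * j + 1" by (metis oddE)
        thus False using i unfolding J_def by auto
      qed
      then obtain k where "i = 2 * k" by blast
      thus "g i = 0" unfolding g_def using sin_even[of k] by simp
    qed
  qed simp
  also have "\<dots> = (\<Sum>j\<in>J. g (2 * j + 1))" by (rule sum.reindex[OF inj, unfolded o_def])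
  also have "\<dots> = (\<Sum>j\<in>J. 2 * ((-1) ^ j * alpha1 (2 * j + 1) n))"
    by (rule sum.cong[OF refl]) (simp add: g_def sin_odd del: of_nat_Suc)
  finally show ?thesis unfolding g_def J_def by (simp add: sum_distrib_left)
qed


definition bb :: "nat \<Rightarrow> nat \<Rightarrow> real" where
  "bb n j = (if 2 * j + 1 \<le> n then cc n (2 * j + 1) / real (2 * j + 1) else 0)"

definition a0 :: "nat \<Rightarrow> real" where "a0 j = 1 / real (2 * j + 1)"

lemma bb_nonneg: "0 \<le> bb n j"
  unfolding bb_def using cc_pos[of n "2*j+1"] by auto

lemma bb_le: "bb n j \<le> a0 j"
  unfolding bb_def a0_def using cc_le1[of "2*j+1" n] by (auto simp: divide_right_mono)

lemma bb_mono: "bb n (Suc j) \<le> bb n j"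
proof (cases "2 * Suc j + 1 \<le> n")
  case True
  have "cc n (2 * Suc j + 1) \<le> cc n (2 * j + 2)"
    using cc_mono[of "2*j+2" n] True by simp
  also have "\<dots> \<le> cc n (2 * j + 1)"
    using cc_mono[of "2*j+1" n] True by simp
  finally have c: "cc n (2 * Suc j + 1) \<le> cc n (2 * j + 1)" .
  have "cc n (2 * Suc j + 1) / real (2 * Suc j + 1) \<le> cc n (2 * j + 1) / real (2 * j + 1)"
    by (rule frac_le) (use c cc_pos[of n "2*j+1"] in auto)
  thus ?thesis using True unfolding bb_def by auto
next
  case False
  thus ?thesis using bb_nonneg[of n j] unfolding bb_def by auto
qed

lemma bb_lim: "(\<lambda>n. bb n j) \<longlonglongrightarrow> a0 j"
proof -
  have "(\<lambda>n. cc n (2 * j + 1) / real (2 * j + 1)) \<longlonglongrightarrow> 1 / real (2 * j + 1)"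
    by (intro tendsto_divide cc_lim tendsto_const) auto
  moreover have "eventually (\<lambda>n. cc n (2 * j + 1) / real (2 * j + 1) = bb n j) sequentially"
    using eventually_ge_at_top[of "2*j+1"] by eventually_elim (simp add: bb_def)
  ultimately show ?thesis unfolding a0_def using Lim_transform_eventually by fastforce
qed

lemma alt_tail_aux:
  fixes a :: "nat \<Rightarrow> real"
  assumes mono: "\<And>j. a (Suc j) \<le> a j" and nn: "\<And>j. 0 \<le> a j"
  shows "0 \<le> (-1)^J * (\<Sum>j=J..<J+k. (-1)^j * a j) \<and> (-1)^J * (\<Sum>j=J..<J+k. (-1)^j * a j) \<le> a J"
proof (induction k arbitrary: J)
  case 0 thus ?case using nn by simp
next
  case (Suc k)
  define X where "X = (-1)^(Suc J) * (\<Sum>j=Suc J..<Suc J+k. (-1)^j * a j)"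
  have IH: "0 \<le> X" "X \<le> a (Suc J)" using Suc.IH[of "Suc J"] unfolding X_def by auto
  have spl: "(\<Sum>j=J..<J+Suc k. (-1)^j * a j) = (-1)^J * a J + (\<Sum>j=Suc J..<Suc J+k. (-1)^j * a j)"
    by (subst sum.atLeast_Suc_lessThan) auto
  have sq: "((-1::real)^J) * (-1)^J = 1"
    by (metis power_add power_mult_distrib mult_minus_left mult_1 neg_one_even_power even_add)
  have "(-1)^J * (\<Sum>j=J..<J+Suc k. (-1)^j * a j) = a J - X"
    unfolding spl X_def using sq by (simp add: algebra_simps)
  thus ?case using IH mono[of J] by simp
qed

lemma alt_tail:
  fixes a :: "nat \<Rightarrow> real"
  assumes "\<And>j. a (Suc j) \<le> a j" "\<And>j. 0 \<le> a j" "J \<le> N"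
  shows "\<bar>\<Sum>j=J..<N. (-1)^j * a j\<bar> \<le> a J"
proof -
  obtain k where N: "N = J + k" using assms(3) le_Suc_ex by blast
  have "\<bar>(-1)^J * (\<Sum>j=J..<N. (-1)^j * a j)\<bar> \<le> a J"
    using alt_tail_aux[where a=a and J=J and k=k] assms(1,2) unfolding N by auto
  thus ?thesis by (simp add: abs_mult power_abs)
qed

lemma leibniz_pi: "(\<lambda>N. \<Sum>j<N. (-1)^j * a0 j) \<longlonglongrightarrow> pi / 4"
proof -
  have a0z: "a0 \<longlonglongrightarrow> 0"
    unfolding a0_def
    using LIMSEQ_linear[OF LIMSEQ_ignore_initial_segment[OF lim_1_over_n, of 1], of 2]
    by (simp add: mult.commute)
  have "monoseq a0"
    by (rule decseq_imp_monoseq, rule decseq_SucI) (simp add: a0_def frac_le)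
  hence sm: "summable (\<lambda>j. (-1)^j * a0 j)" using summable_Leibniz(1)[OF a0z] by blast
  have e: "(\<Sum>j. (-1)^j * a0 j) = pi / 4"
    unfolding pi_series a0_def by (simp add: mult.commute)
  show ?thesis using summable_LIMSEQ[OF sm] unfolding e .
qed

lemma tri_aux:
  fixes A a B p t r :: real
  assumes "\<bar>A - a\<bar> < r / 3" "\<bar>B\<bar> \<le> t" "\<bar>a - p\<bar> < r / 3" "t < r / 3"
  shows "\<bar>A + B - p\<bar> < r"
proof -
  have "\<bar>A + B - p\<bar> \<le> \<bar>A - a\<bar> + \<bar>B\<bar> + \<bar>a - p\<bar>" by linarith
  thus ?thesis using assms by linarith
qed

lemma main_lim: "(\<lambda>n. \<Sum>j<n. (-1)^j * bb n j) \<longlonglongrightarrow> pi / 4"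
  unfolding LIMSEQ_iff
proof (intro allI impI)
  fix r :: real assume r: "0 < r"
  have a0z: "a0 \<longlonglongrightarrow> 0"
    unfolding a0_def
    using LIMSEQ_linear[OF LIMSEQ_ignore_initial_segment[OF lim_1_over_n, of 1], of 2]
    by (simp add: mult.commute)
  obtain N1 where N1: "\<And>n. n \<ge> N1 \<Longrightarrow> norm ((\<Sum>j<n. (-1)^j * a0 j) - pi / 4) < r / 3"
    using leibniz_pi[unfolded LIMSEQ_iff] r by (meson zero_less_divide_iff zero_less_numeral)
  obtain N2 where N2: "\<And>n. n \<ge> N2 \<Longrightarrow> norm (a0 n - 0) < r / 3"
    using a0z[unfolded LIMSEQ_iff] r by (meson zero_less_divide_iff zero_less_numeral)
  define J where "J = max N1 N2"
  have J1: "\<bar>(\<Sum>j<J. (-1)^j * a0 j) - pi / 4\<bar> < r / 3" using N1[of J] unfolding J_def by simp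
  have J2: "a0 J < r / 3" using N2[of J] unfolding J_def by (simp add: a0_def)
  have T: "(\<lambda>n. \<Sum>j<J. (-1)^j * bb n j) \<longlonglongrightarrow> (\<Sum>j<J. (-1)^j * a0 j)"
    by (intro tendsto_sum tendsto_mult tendsto_const bb_lim)
  obtain N3 where N3: "\<And>n. n \<ge> N3 \<Longrightarrow> norm ((\<Sum>j<J. (-1)^j * bb n j) - (\<Sum>j<J. (-1)^j * a0 j)) < r / 3"
    using T[unfolded LIMSEQ_iff] r by (meson zero_less_divide_iff zero_less_numeral)
  show "\<exists>no. \<forall>n\<ge>no. norm ((\<Sum>j<n. (-1)^j * bb n j) - pi / 4) < r"
  proof (intro exI allI impI)
    fix n assume n: "max J N3 \<le> n"
    have split: "(\<Sum>j<n. (-1)^j * bb n j) = (\<Sum>j<J. (-1)^j * bb n j) + (\<Sum>j=J..<n. (-1)^j * bb n j)"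
      using sum.atLeastLessThan_concat[of 0 J n "\<lambda>j. (-1)^j * bb n j"] n
      by (simp add: atLeast0LessThan)
    have tail: "\<bar>\<Sum>j=J..<n. (-1)^j * bb n j\<bar> \<le> a0 J"
      using alt_tail[of "bb n" J n, OF bb_mono bb_nonneg] n bb_le[of n J] by simp
    have "\<bar>(\<Sum>j<J. (-1)^j * bb n j) - (\<Sum>j<J. (-1)^j * a0 j)\<bar> < r / 3"
      using N3[of n] n by simp
    thus "norm ((\<Sum>j<n. (-1)^j * bb n j) - pi / 4) < r"
      unfolding split real_norm_def by (rule tri_aux[OF _ tail J1 J2])
  qed
qed


lemma S_eq: "(\<Sum>j\<in>{j::nat. 2 * j + 1 \<le> n}. (-1) ^ j * alpha1 (2 * j + 1) n) = 2 * (\<Sum>j<n. (-1)^j * bb n j)"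
proof -
  have "(\<Sum>j\<in>{j::nat. 2 * j + 1 \<le> n}. (-1) ^ j * alpha1 (2 * j + 1) n)
      = (\<Sum>j\<in>{j::nat. 2 * j + 1 \<le> n}. 2 * ((-1)^j * bb n j))"
  proof (rule sum.cong[OF refl])
    fix j assume j: "j \<in> {j::nat. 2 * j + 1 \<le> n}"
    have "alpha1 (2 * j + 1) n = 2 * (-1)^(2 * j + 1 - 1) * cc n (2 * j + 1) / real (2 * j + 1)"
      using j by (intro alpha_closed) auto
    thus "(-1) ^ j * alpha1 (2 * j + 1) n = 2 * ((-1)^j * bb n j)"
      using j unfolding bb_def by simp
  qed
  also have "\<dots> = (\<Sum>j<n. 2 * ((-1)^j * bb n j))"
    by (rule sum.mono_neutral_left) (auto simp: bb_def)
  finally show ?thesis by (simp add: sum_distrib_left)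
qed

theorem mainTheorem7:
  shows "(\<forall>n::nat. n \<ge> 1 \<longrightarrow>
            poly (pderiv (interp_sin n)) 0
              = (1 / pi) * (\<Sum>m=1..n. alpha1 m n * (sin (real m * pi / 2) - sin (- (real m * pi / 2))))
          \<and> (1 / pi) * (\<Sum>m=1..n. alpha1 m n * (sin (real m * pi / 2) - sin (- (real m * pi / 2))))
              = (2 / pi) * (\<Sum>j\<in>{j::nat. 2 * j + 1 \<le> n}. (-1) ^ j * alpha1 (2 * j + 1) n))
       \<and> (\<lambda>n. poly (pderiv (interp_sin n)) 0) \<longlonglongrightarrow> 1
       \<and> (sin has_real_derivative 1) (at 0)"
proof (intro conjI allI impI)
  fix n :: nat
  show "poly (pderiv (interp_sin n)) 0
              = (1 / pi) * (\<Sum>m=1..n. alpha1 m n * (sin (real m * pi / 2) - sin (- (real m * pi / 2))))"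
    by (rule deriv_formula)
  show "(1 / pi) * (\<Sum>m=1..n. alpha1 m n * (sin (real m * pi / 2) - sin (- (real m * pi / 2))))
              = (2 / pi) * (\<Sum>j\<in>{j::nat. 2 * j + 1 \<le> n}. (-1) ^ j * alpha1 (2 * j + 1) n)"
    unfolding sum_sin by simp
next
  have e: "poly (pderiv (interp_sin n)) 0 = (4 / pi) * (\<Sum>j<n. (-1)^j * bb n j)" for n
    unfolding deriv_formula sum_sin S_eq by simp
  have "(\<lambda>n. (4 / pi) * (\<Sum>j<n. (-1)^j * bb n j)) \<longlonglongrightarrow> (4 / pi) * (pi / 4)"
    by (intro tendsto_mult tendsto_const main_lim)
  thus "(\<lambda>n. poly (pderiv (interp_sin n)) 0) \<longlonglongrightarrow> 1"
    unfolding e by simp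
next
  show "(sin has_real_derivative 1) (at 0)"
    using DERIV_sin[of 0] by simp
qed

end
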